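(* Let $\Gamma_1,\Gamma_2$ be disjoint sets of unary letters and consider the following nondeterministic procedure on a context equation $u = v$. First, for each context variable $X$: guess a letter $a$ (intended as the last letter of a solution's value for $X$); if $a\in\Gamma_1$, replace every occurrence of $X$ by $Xa$ (i.e. each $X(s)$ by $X(a(s))$), and then guess whether $X$ is to be removed, in which case replace every $X(s)$ by $s$. Second, for each context variable $X$ and each variable $x$: guess a letter $b$ (intended as its first letter); if $b\in\Gamma_2$, replace every occurrence of $X$ by $bX$ (each $X(s)$ by $b(X(s))$), respectively every $x$ by $b(x)$, and then (for context variables) guess whether $X$ is to be removed, in which case replace each $X(s)$ by $s$. Then: (a) whatever the choices, if the resulting equation $u'=v'$ has a solution, so does $u=v$; (b) if $u=v$ has a non-empty solution $\sigma$, then for some choices the resulting equation $u'=v'$ has a non-empty solution $\sigma'$ such that $\sigma'(u')=\sigma(u)$ and $\Gamma_1,\Gamma_2$ is a non-crossing partition with respect to $\sigma'$.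
   Context: $\Sigma$ is a ranked signature, $\Omega\notin\Sigma$ a special constant; context variables have arity $1$, variables arity $0$. Ground terms, ground contexts (exactly one $\Omega$), terms and context equations $u=v$ are as usual; a substitution $\sigma$ assigns ground contexts to context variables and ground terms to variables, extended by $\sigma(a)=a$, $\sigma(f(t_1,\dots,t_m))=f(\sigma(t_1),\dots,\sigma(t_m))$, $\sigma(Xt)=\sigma(X)\sigma(t)$; a solution satisfies $\sigma(u)=\sigma(v)$; it is non-empty if $\sigma(X)\neq\Omega$ for every context variable $X$ occurring in the equation. The first letter of $\sigma(X)$ or $\sigma(x)$ is the label of its root; the last letter of $\sigma(X)$ is the label of the father of $\Omega$. Each node of $\sigma(u)$ comes either from an explicit letter occurrence of $u$ or from $\sigma(X)$ or $\sigma(x)$ for a particular occurrence of $X$ or $x$. An occurrence in $\sigma(u)$ or $\sigma(v)$ of a node labelled $a$ with child labelled $b$ is explicit if both come from explicit letters, implicit if both come from the same $\sigma(X)$ or $\sigma(x)$, and crossing otherwise. $\Gamma_1,\Gamma_2$ is non-crossing w.r.t. $\sigma$ if no $a\in\Gamma_1$, $b\in\Gamma_2$ have a crossing occurrence of $ab$. *)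

theory Defs
  imports Main
begin

text \<open>Letters of the ranked signature have type 'f, with rank function ar.
  The special constant Omega (not in the signature) is the constructor Hole.\<close>

datatype 'f gtree = Hole | Node 'f "'f gtree list"

fun wf_gt :: "('f \<Rightarrow> nat) \<Rightarrow> 'f gtree \<Rightarrow> bool" where
  "wf_gt ar Hole = True"
| "wf_gt ar (Node f ts) = (length ts = ar f \<and> (\<forall>t\<in>set ts. wf_gt ar t))"

fun nholes :: "'f gtree \<Rightarrow> nat" where
  "nholes Hole = 1"
| "nholes (Node f ts) = sum_list (map nholes ts)"

definition ground_term :: "('f \<Rightarrow> nat) \<Rightarrow> 'f gtree \<Rightarrow> bool" where
  "ground_term ar t \<longleftrightarrow> wf_gt ar t \<and> nholes t = 0"

definition ground_ctxt :: "('f \<Rightarrow> nat) \<Rightarrow> 'f gtree \<Rightarrow> bool" where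
  "ground_ctxt ar C \<longleftrightarrow> wf_gt ar C \<and> nholes C = 1"

fun fill :: "'f gtree \<Rightarrow> 'f gtree \<Rightarrow> 'f gtree" where
  "fill Hole s = s"
| "fill (Node f ts) s = Node f (map (\<lambda>t. fill t s) ts)"

datatype ('f, 'c, 'v) trm =
    TVar 'v
  | TCtx 'c "('f, 'c, 'v) trm"
  | TFun 'f "('f, 'c, 'v) trm list"

fun wf_trm :: "('f \<Rightarrow> nat) \<Rightarrow> ('f, 'c, 'v) trm \<Rightarrow> bool" where
  "wf_trm ar (TVar x) = True"
| "wf_trm ar (TCtx X t) = wf_trm ar t"
| "wf_trm ar (TFun f ts) = (length ts = ar f \<and> (\<forall>t\<in>set ts. wf_trm ar t))"

fun cvars :: "('f, 'c, 'v) trm \<Rightarrow> 'c set" where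
  "cvars (TVar x) = {}"
| "cvars (TCtx X t) = insert X (cvars t)"
| "cvars (TFun f ts) = (\<Union>t\<in>set ts. cvars t)"

fun vars :: "('f, 'c, 'v) trm \<Rightarrow> 'v set" where
  "vars (TVar x) = {x}"
| "vars (TCtx X t) = vars t"
| "vars (TFun f ts) = (\<Union>t\<in>set ts. vars t)"

fun inst :: "('c \<Rightarrow> 'f gtree) \<Rightarrow> ('v \<Rightarrow> 'f gtree) \<Rightarrow> ('f, 'c, 'v) trm \<Rightarrow> 'f gtree" where
  "inst sc sv (TVar x) = sv x"
| "inst sc sv (TCtx X t) = fill (sc X) (inst sc sv t)"
| "inst sc sv (TFun f ts) = Node f (map (inst sc sv) ts)"

definition is_subst_for ::
  "('f \<Rightarrow> nat) \<Rightarrow> ('c \<Rightarrow> 'f gtree) \<Rightarrow> ('v \<Rightarrow> 'f gtree) \<Rightarrow> ('f, 'c, 'v) trm \<Rightarrow> ('f, 'c, 'v) trm \<Rightarrow> bool" where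
  "is_subst_for ar sc sv u v \<longleftrightarrow>
     (\<forall>X \<in> cvars u \<union> cvars v. ground_ctxt ar (sc X)) \<and>
     (\<forall>x \<in> vars u \<union> vars v. ground_term ar (sv x))"

definition is_solution ::
  "('f \<Rightarrow> nat) \<Rightarrow> ('c \<Rightarrow> 'f gtree) \<Rightarrow> ('v \<Rightarrow> 'f gtree) \<Rightarrow> ('f, 'c, 'v) trm \<Rightarrow> ('f, 'c, 'v) trm \<Rightarrow> bool" where
  "is_solution ar sc sv u v \<longleftrightarrow> is_subst_for ar sc sv u v \<and> inst sc sv u = inst sc sv v"

definition is_nonempty_solution ::
  "('f \<Rightarrow> nat) \<Rightarrow> ('c \<Rightarrow> 'f gtree) \<Rightarrow> ('v \<Rightarrow> 'f gtree) \<Rightarrow> ('f, 'c, 'v) trm \<Rightarrow> ('f, 'c, 'v) trm \<Rightarrow> bool" where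
  "is_nonempty_solution ar sc sv u v \<longleftrightarrow>
     is_solution ar sc sv u v \<and> (\<forall>X \<in> cvars u \<union> cvars v. sc X \<noteq> Hole)"

text \<open>Annotated ground trees: every node carries its origin. Origin None means the
  node comes from an explicit letter of the term; Some p means it comes from the value
  of the (context) variable occurring at position p of the term.\<close>

datatype ('f, 'o) atree = AHole | ANode 'f 'o "('f, 'o) atree list"

fun ann :: "'o \<Rightarrow> 'f gtree \<Rightarrow> ('f, 'o) atree" where
  "ann o' Hole = AHole"
| "ann o' (Node f ts) = ANode f o' (map (ann o') ts)"

fun afill :: "('f, 'o) atree \<Rightarrow> ('f, 'o) atree \<Rightarrow> ('f, 'o) atree" where
  "afill AHole s = s"
| "afill (ANode f o' ts) s = ANode f o' (map (\<lambda>t. afill t s) ts)"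

function ainst :: "('c \<Rightarrow> 'f gtree) \<Rightarrow> ('v \<Rightarrow> 'f gtree) \<Rightarrow> nat list \<Rightarrow> ('f, 'c, 'v) trm
    \<Rightarrow> ('f, nat list option) atree" where
  "ainst sc sv p (TVar x) = ann (Some p) (sv x)"
| "ainst sc sv p (TCtx X t) = afill (ann (Some p) (sc X)) (ainst sc sv (p @ [0]) t)"
| "ainst sc sv p (TFun f ts) =
     ANode f None (map (\<lambda>(i, t). ainst sc sv (p @ [i]) t) (zip [0..<length ts] ts))"
  by pat_completeness auto
termination
  by (relation "measure (\<lambda>(_, _, _, t). size t)")
     (auto dest!: set_zip_rightD simp: less_Suc_eq_le size_list_estimation')

fun aedges :: "('f, 'o) atree \<Rightarrow> ('f \<times> 'o \<times> 'f \<times> 'o) set" where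
  "aedges AHole = {}"
| "aedges (ANode f o' ts) =
     {(f, o', g, o'') | g o'' ts'. ANode g o'' ts' \<in> set ts} \<union> (\<Union>t\<in>set ts. aedges t)"

text \<open>An occurrence is explicit if both nodes have origin None, implicit if both come
  from the same occurrence Some p, crossing otherwise, i.e. iff the origins differ.\<close>
definition non_crossing ::
  "'f set \<Rightarrow> 'f set \<Rightarrow> ('c \<Rightarrow> 'f gtree) \<Rightarrow> ('v \<Rightarrow> 'f gtree) \<Rightarrow> ('f, 'c, 'v) trm \<Rightarrow> ('f, 'c, 'v) trm \<Rightarrow> bool" where
  "non_crossing G1 G2 sc sv u v \<longleftrightarrow>
     (\<forall>(a, o1, b, o2) \<in> aedges (ainst sc sv [] u) \<union> aedges (ainst sc sv [] v).
        a \<in> G1 \<longrightarrow> b \<in> G2 \<longrightarrow> o1 = o2)"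

text \<open>Stage 1 (popping last letters from Gamma1): la X is the guessed last letter of X,
  rem X whether X is removed (only relevant when la X is in G1).\<close>
fun pop_last :: "'f set \<Rightarrow> ('c \<Rightarrow> 'f) \<Rightarrow> ('c \<Rightarrow> bool) \<Rightarrow> ('f, 'c, 'v) trm \<Rightarrow> ('f, 'c, 'v) trm" where
  "pop_last G1 la rem (TVar x) = TVar x"
| "pop_last G1 la rem (TCtx X t) =
     (let t' = pop_last G1 la rem t in
      if la X \<in> G1 then (if rem X then TFun (la X) [t'] else TCtx X (TFun (la X) [t']))
      else TCtx X t')"
| "pop_last G1 la rem (TFun f ts) = TFun f (map (pop_last G1 la rem) ts)"

text \<open>Stage 2 (popping first letters from Gamma2): fc X / fv x are the guessed first
  letters of X / x, rem X whether X is removed (only relevant when fc X is in G2).\<close>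
fun pop_first :: "'f set \<Rightarrow> ('c \<Rightarrow> 'f) \<Rightarrow> ('c \<Rightarrow> bool) \<Rightarrow> ('v \<Rightarrow> 'f) \<Rightarrow> ('f, 'c, 'v) trm \<Rightarrow> ('f, 'c, 'v) trm" where
  "pop_first G2 fc rem fv (TVar x) = (if fv x \<in> G2 then TFun (fv x) [TVar x] else TVar x)"
| "pop_first G2 fc rem fv (TCtx X t) =
     (let t' = pop_first G2 fc rem fv t in
      if fc X \<in> G2 then (if rem X then TFun (fc X) [t'] else TFun (fc X) [TCtx X t'])
      else TCtx X t')"
| "pop_first G2 fc rem fv (TFun f ts) = TFun f (map (pop_first G2 fc rem fv) ts)"

definition transform ::
  "'f set \<Rightarrow> 'f set \<Rightarrow> ('c \<Rightarrow> 'f) \<Rightarrow> ('c \<Rightarrow> bool) \<Rightarrow> ('c \<Rightarrow> 'f) \<Rightarrow> ('c \<Rightarrow> bool) \<Rightarrow> ('v \<Rightarrow> 'f)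
     \<Rightarrow> ('f, 'c, 'v) trm \<Rightarrow> ('f, 'c, 'v) trm" where
  "transform G1 G2 la rem1 fc rem2 fv t = pop_first G2 fc rem2 fv (pop_last G1 la rem1 t)"

end

theory Submission
  imports Defs
begin


lemma fill_assoc: "fill (fill C D) s = fill C (fill D s)"
  by (induction C) auto

lemma wf_fill_D: "wf_gt ar (fill D s) \<Longrightarrow> wf_gt ar D"
  by (induction D) auto

lemma wf_fill: "wf_gt ar D \<Longrightarrow> wf_gt ar s \<Longrightarrow> wf_gt ar (fill D s)"
  by (induction D) auto

lemma nholes_fill: "nholes (fill D s) = nholes D * nholes s"
proof (induction D)
  case Hole then show ?case by simp
next
  case (Node f ts)
  have "sum_list (map (\<lambda>t. nholes (fill t s)) ts) = sum_list (map (\<lambda>t. nholes t * nholes s) ts)"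
    using Node by (intro arg_cong[where f=sum_list] map_cong) auto
  also have "\<dots> = sum_list (map nholes ts) * nholes s"
    by (induction ts) (auto simp: algebra_simps)
  finally show ?case by (simp add: o_def)
qed

fun hfl :: "'f gtree \<Rightarrow> 'f set" where
  "hfl Hole = {}"
| "hfl (Node f ts) = (if Hole \<in> set ts then {f} else {}) \<union> (\<Union>t\<in>set ts. hfl t)"

lemma hfl0: "nholes C = 0 \<Longrightarrow> hfl C = {}"
proof (induction C)
  case (Node f ts)
  then have "\<forall>t\<in>set ts. nholes t = 0" by (simp add: sum_list_eq_0_iff)
  moreover then have "Hole \<notin> set ts" by force
  ultimately show ?case using Node by auto
qed simp

lemma sum1: "sum_list (map (nholes::'f gtree \<Rightarrow> nat) ts) = 1 \<Longrightarrow>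
  \<exists>l t r. ts = l @ t # r \<and> nholes t = 1 \<and> (\<forall>s\<in>set l \<union> set r. nholes s = 0)"
proof (induction ts)
  case Nil then show ?case by simp
next
  case (Cons a ts)
  show ?case
  proof (cases "nholes a")
    case 0
    with Cons obtain l t r where "ts = l @ t # r" "nholes t = 1" "\<forall>s\<in>set l \<union> set r. nholes s = 0" by auto
    with 0 show ?thesis by (intro exI[of _ "a#l"]) auto
  next
    case (Suc n)
    with Cons have "n = 0" "sum_list (map nholes ts) = 0" by auto
    then show ?thesis using Suc by (intro exI[of _ "[]"]) auto
  qed
qed

lemma hfl1: "nholes C = 1 \<Longrightarrow> C \<noteq> Hole \<Longrightarrow> \<exists>f. hfl C = {f}"
proof (induction C)
  case Hole then show ?case by simp
next
  case (Node f ts)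
  then obtain l t r where tr: "ts = l @ t # r" "nholes t = 1" "\<forall>s\<in>set l \<union> set r. nholes s = 0"
    using sum1[of ts] by auto
  have z: "\<forall>s\<in>set l \<union> set r. hfl s = {} \<and> s \<noteq> Hole" proof
    fix s assume "s \<in> set l \<union> set r"
    with tr(3) have "nholes s = 0" by auto
    then show "hfl s = {} \<and> s \<noteq> Hole" using hfl0 by (cases s) auto
  qed
  show ?case
  proof (cases "t = Hole")
    case True
    with tr z show ?thesis by auto
  next
    case False
    with Node.IH[of t] tr obtain g where "hfl t = {g}" by auto
    with tr z False show ?thesis by (intro exI[of _ g]) auto
  qed
qed

fun dl :: "'f gtree \<Rightarrow> 'f gtree" where
  "dl Hole = Hole"
| "dl (Node f ts) = (if ts = [Hole] then Hole else Node f (map dl ts))"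

lemma dl_fill: "wf_gt ar C \<Longrightarrow> (\<forall>f\<in>hfl C. f = a) \<Longrightarrow> ar a = 1 \<Longrightarrow> C \<noteq> Hole \<Longrightarrow>
   C = fill (dl C) (Node a [Hole])"
proof (induction C)
  case Hole then show ?case by simp
next
  case (Node f ts)
  show ?case
  proof (cases "ts = [Hole]")
    case True with Node show ?thesis by auto
  next
    case False
    have nh: "Hole \<notin> set ts"
    proof
      assume "Hole \<in> set ts"
      with Node.prems have "f = a" "length ts = 1" by auto
      then show False using False \<open>Hole \<in> set ts\<close> by (cases ts) auto
    qed
    have "\<forall>t\<in>set ts. t = fill (dl t) (Node a [Hole])"
      using Node nh by auto
    then have "ts = map (\<lambda>t. fill (dl t) (Node a [Hole])) ts"
      by (simp add: map_idI)
    with False show ?thesis by (simp add: o_def)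
  qed
qed



lemma L1: "(\<forall>X\<in>cvars t. sc X = (if la X \<in> G1 then (if rem X then Node (la X) [Hole]
      else fill (sc1 X) (Node (la X) [Hole])) else sc1 X))
  \<Longrightarrow> inst sc sv t = inst sc1 sv (pop_last G1 la rem t)"
  by (induction t) (auto simp: Let_def fill_assoc)

lemma L2: "(\<forall>X\<in>cvars t. sc1 X = (if fc X \<in> G2 then (if rem X then Node (fc X) [Hole]
      else Node (fc X) [sc' X]) else sc' X))
  \<Longrightarrow> (\<forall>x\<in>vars t. sv x = (if fv x \<in> G2 then Node (fv x) [sv' x] else sv' x))
  \<Longrightarrow> inst sc1 sv t = inst sc' sv' (pop_first G2 fc rem fv t)"
  by (induction t) (auto simp: Let_def)

lemma cvars_pl: "cvars (pop_last G1 la rem t) = {X\<in>cvars t. \<not>(la X \<in> G1 \<and> rem X)}"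
  by (induction t) (auto simp: Let_def)

lemma vars_pl: "vars (pop_last G1 la rem t) = vars t"
  by (induction t) (auto simp: Let_def)

lemma cvars_pf: "cvars (pop_first G2 fc rem fv t) = {X\<in>cvars t. \<not>(fc X \<in> G2 \<and> rem X)}"
  by (induction t) (auto simp: Let_def)

lemma vars_pf: "vars (pop_first G2 fc rem fv t) = vars t"
  by (induction t) (auto simp: Let_def)


lemma gc_node1: "ar a = 1 \<Longrightarrow> ground_ctxt ar C \<Longrightarrow> ground_ctxt ar (Node a [C])"
  by (auto simp: ground_ctxt_def)

lemma gt_node1: "ar a = 1 \<Longrightarrow> ground_term ar C \<Longrightarrow> ground_term ar (Node a [C])"
  by (auto simp: ground_term_def)

lemma gc_fill: "ground_ctxt ar C \<Longrightarrow> ground_ctxt ar D \<Longrightarrow> ground_ctxt ar (fill C D)"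
  by (auto simp: ground_ctxt_def wf_fill nholes_fill)

lemma partA:
  assumes ar: "\<forall>a \<in> G1 \<union> G2. ar a = 1"
    and sol: "is_solution ar sc' sv' (transform G1 G2 la rem1 fc rem2 fv u) (transform G1 G2 la rem1 fc rem2 fv v)"
  shows "\<exists>sc sv. is_solution ar sc sv u v"
proof -
  define sc1 where "sc1 X = (if fc X \<in> G2 then (if rem2 X then Node (fc X) [Hole]
      else Node (fc X) [sc' X]) else sc' X)" for X
  define sc where "sc X = (if la X \<in> G1 then (if rem1 X then Node (la X) [Hole]
      else fill (sc1 X) (Node (la X) [Hole])) else sc1 X)" for X
  define sv where "sv x = (if fv x \<in> G2 then Node (fv x) [sv' x] else sv' x)" for x
  have eq: "inst sc sv t = inst sc' sv' (transform G1 G2 la rem1 fc rem2 fv t)" for t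
  proof -
    have "inst sc sv t = inst sc1 sv (pop_last G1 la rem1 t)"
      by (rule L1) (auto simp: sc_def)
    also have "\<dots> = inst sc' sv' (transform G1 G2 la rem1 fc rem2 fv t)"
      unfolding transform_def by (rule L2) (auto simp: sc1_def sv_def)
    finally show ?thesis .
  qed
  have gh: "ground_ctxt ar (Node a [Hole])" if "a \<in> G1 \<union> G2" for a
    using ar that by (auto simp: ground_ctxt_def)
  have g1: "ground_ctxt ar (sc1 X)" if "X \<in> cvars (pop_last G1 la rem1 u) \<union> cvars (pop_last G1 la rem1 v)" for X
  proof (cases "fc X \<in> G2 \<and> rem2 X")
    case True then show ?thesis using gh by (auto simp: sc1_def)
  next
    case False
    then have "X \<in> cvars (transform G1 G2 la rem1 fc rem2 fv u) \<union> cvars (transform G1 G2 la rem1 fc rem2 fv v)"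
      using that unfolding transform_def cvars_pf by auto
    then have "ground_ctxt ar (sc' X)" using sol by (auto simp: is_solution_def is_subst_for_def)
    then show ?thesis using False ar by (auto simp: sc1_def intro: gc_node1)
  qed
  have g: "ground_ctxt ar (sc X)" if "X \<in> cvars u \<union> cvars v" for X
  proof (cases "la X \<in> G1 \<and> rem1 X")
    case True then show ?thesis using gh by (auto simp: sc_def)
  next
    case False
    then have "ground_ctxt ar (sc1 X)" using that g1 unfolding cvars_pl by auto
    then show ?thesis using False gh by (auto simp: sc_def intro: gc_fill)
  qed
  have gv: "ground_term ar (sv x)" if "x \<in> vars u \<union> vars v" for x
  proof -
    have "ground_term ar (sv' x)" using sol that
      by (auto simp: is_solution_def is_subst_for_def transform_def vars_pf vars_pl)
    then show ?thesis using ar by (auto simp: sv_def intro: gt_node1)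
  qed
  show ?thesis using g gv eq sol
    by (intro exI[of _ sc] exI[of _ sv]) (auto simp: is_solution_def is_subst_for_def)
qed



fun hfa :: "('f, 'o) atree \<Rightarrow> ('f \<times> 'o) set" where
  "hfa AHole = {}"
| "hfa (ANode f o' ts) = (if AHole \<in> set ts then {(f, o')} else {}) \<union> (\<Union>t\<in>set ts. hfa t)"

lemma ann_hole: "ann o' t = AHole \<longleftrightarrow> t = Hole"
  by (cases t) auto

lemma ann_hole': "AHole = ann o' t \<longleftrightarrow> t = Hole"
  by (cases t) auto

lemma hfa_ann: "hfa (ann o' C) = (\<lambda>f. (f, o')) ` hfl C"
proof (induction C)
  case (Node f ts)
  have "AHole \<in> set (map (ann o') ts) \<longleftrightarrow> Hole \<in> set ts"
    by (simp add: image_iff ann_hole')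
  then show ?case using Node by auto
qed simp

lemma aedges_ann: "(a, o1, b, o2) \<in> aedges (ann o' C) \<Longrightarrow> o1 = o' \<and> o2 = o'"
proof (induction C)
  case (Node f ts)
  then show ?case by (auto simp: ann_hole) (metis ann.elims atree.distinct(1) atree.inject)
qed simp

lemma aedges_afill: "aedges (afill A s) \<subseteq> aedges A \<union> aedges s \<union>
   {(a1, b1, c1, d1) | a1 b1 c1 d1 ts'. (a1, b1) \<in> hfa A \<and> s = ANode c1 d1 ts'}"
proof (induction A)
  case AHole then show ?case by simp
next
  case (ANode f o' ts)
  show ?case
  proof
    fix e assume "e \<in> aedges (afill (ANode f o' ts) s)"
    then consider (dir) g o'' ts' t where "e = (f, o', g, o'')" "t \<in> set ts" "afill t s = ANode g o'' ts'"
      | (rec) t where "t \<in> set ts" "e \<in> aedges (afill t s)"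
      by (auto; metis)
    then show "e \<in> aedges (ANode f o' ts) \<union> aedges s \<union>
   {(a1, b1, c1, d1) | a1 b1 c1 d1 ts'. (a1, b1) \<in> hfa (ANode f o' ts) \<and> s = ANode c1 d1 ts'}"
    proof cases
      case dir
      then show ?thesis by (cases t) auto
    next
      case rec
      then show ?thesis using ANode.IH[OF rec(1)] by auto
    qed
  qed
qed

definition NC :: "'f set \<Rightarrow> 'f set \<Rightarrow> ('f, 'o) atree \<Rightarrow> bool" where
  "NC G1 G2 s \<longleftrightarrow> (\<forall>(a, o1, b, o2) \<in> aedges s. a \<in> G1 \<longrightarrow> b \<in> G2 \<longrightarrow> o1 = o2)"

definition Rt :: "'f set \<Rightarrow> ('c \<Rightarrow> 'f gtree) \<Rightarrow> ('v \<Rightarrow> 'f gtree) \<Rightarrow> ('f, 'c, 'v) trm \<Rightarrow> bool" where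
  "Rt G2 sc sv t \<longleftrightarrow> (\<forall>p g o' ts. ainst sc sv p t = ANode g o' ts \<longrightarrow> g \<in> G2 \<longrightarrow> o' = None)"

definition R2 :: "'f set \<Rightarrow> ('c \<Rightarrow> 'f gtree) \<Rightarrow> ('v \<Rightarrow> 'f gtree) \<Rightarrow> ('f, 'c, 'v) trm \<Rightarrow> bool" where
  "R2 G2 sc sv t \<longleftrightarrow> (\<forall>p g o' ts. ainst sc sv p t = ANode g o' ts \<longrightarrow> g \<notin> G2)"

fun ok :: "'f set \<Rightarrow> 'f set \<Rightarrow> ('c \<Rightarrow> 'f gtree) \<Rightarrow> ('v \<Rightarrow> 'f gtree) \<Rightarrow> ('f, 'c, 'v) trm \<Rightarrow> bool" where
  "ok G1 G2 sc sv (TVar x) = True"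
| "ok G1 G2 sc sv (TCtx X t) = (ok G1 G2 sc sv t \<and> (hfl (sc X) \<inter> G1 \<noteq> {} \<longrightarrow> R2 G2 sc sv t))"
| "ok G1 G2 sc sv (TFun f ts) = (\<forall>t\<in>set ts. ok G1 G2 sc sv t \<and> (f \<in> G1 \<longrightarrow> Rt G2 sc sv t))"

lemma ok_NC: "ok G1 G2 sc sv t \<Longrightarrow> NC G1 G2 (ainst sc sv p t)"
proof (induction sc sv p t rule: ainst.induct)
  case (1 sc sv p x)
  then show ?case by (auto simp: NC_def dest: aedges_ann)
next
  case (2 sc sv p X t)
  have IH: "NC G1 G2 (ainst sc sv (p @ [0]) t)" using 2 by auto
  show ?case unfolding NC_def
  proof (clarify)
    fix a o1 b o2
    assume e: "(a, o1, b, o2) \<in> aedges (ainst sc sv p (TCtx X t))" and ab: "a \<in> G1" "b \<in> G2"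
    from e have "(a, o1, b, o2) \<in> aedges (ann (Some p) (sc X)) \<union> aedges (ainst sc sv (p @ [0]) t) \<union>
   {(f, o', g, o'') | f o' g o'' ts'. (f, o') \<in> hfa (ann (Some p) (sc X)) \<and> ainst sc sv (p @ [0]) t = ANode g o'' ts'}"
      using aedges_afill by fastforce
    then show "o1 = o2"
    proof (elim UnE)
      assume "(a, o1, b, o2) \<in> aedges (ann (Some p) (sc X))"
      then show ?thesis by (auto dest: aedges_ann)
    next
      assume "(a, o1, b, o2) \<in> aedges (ainst sc sv (p @ [0]) t)"
      then show ?thesis using IH ab by (auto simp: NC_def)
    next
      assume "(a, o1, b, o2) \<in> {(f, o', g, o'') | f o' g o'' ts'. (f, o') \<in> hfa (ann (Some p) (sc X)) \<and> ainst sc sv (p @ [0]) t = ANode g o'' ts'}"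
      then obtain ts' where "a \<in> hfl (sc X)" "ainst sc sv (p @ [0]) t = ANode b o2 ts'"
        by (auto simp: hfa_ann)
      moreover then have "R2 G2 sc sv t" using 2 ab by auto
      ultimately show ?thesis using ab by (auto simp: R2_def)
    qed
  qed
next
  case (3 sc sv p f ts)
  show ?case unfolding NC_def
  proof (clarify)
    fix a o1 b o2
    assume e: "(a, o1, b, o2) \<in> aedges (ainst sc sv p (TFun f ts))" and ab: "a \<in> G1" "b \<in> G2"
    then consider (dir) i t ts' where "(i, t) \<in> set (zip [0..<length ts] ts)" "a = f" "o1 = None"
        "ainst sc sv (p @ [i]) t = ANode b o2 ts'"
      | (rec) i t where "(i, t) \<in> set (zip [0..<length ts] ts)" "(a, o1, b, o2) \<in> aedges (ainst sc sv (p @ [i]) t)"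
      by (auto; metis)
    then show "o1 = o2"
    proof cases
      case dir
      then have "t \<in> set ts" by (auto dest: set_zip_rightD)
      then have "Rt G2 sc sv t" using 3 ab dir by auto
      then show ?thesis using dir ab by (auto simp: Rt_def)
    next
      case rec
      then have t: "t \<in> set ts" by (auto dest: set_zip_rightD)
      then have "NC G1 G2 (ainst sc sv (p @ [i]) t)" using 3 rec by auto
      then show ?thesis using rec ab by (auto simp: NC_def)
    qed
  qed
qed



fun pl :: "'f set \<Rightarrow> 'f set \<Rightarrow> ('c \<Rightarrow> 'f gtree) \<Rightarrow> ('f, 'c, 'v) trm \<Rightarrow> bool" where
  "pl G1 G2 sc (TVar x) = True"
| "pl G1 G2 sc (TCtx X s) = (pl G1 G2 sc s \<and> (hfl (sc X) \<inter> G1 \<noteq> {} \<longrightarrow> (\<exists>a ss. s = TFun a ss \<and> a \<notin> G2)))"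
| "pl G1 G2 sc (TFun f ts) = (\<forall>t\<in>set ts. pl G1 G2 sc t)"

lemma Rt_TFun: "Rt G2 sc sv (TFun f ts)"
  by (auto simp: Rt_def)

lemma R2_TFun: "a \<notin> G2 \<Longrightarrow> R2 G2 sc sv (TFun a ts)"
  by (auto simp: R2_def)

lemma PL:
  assumes "G1 \<inter> G2 = {}" "\<forall>X\<in>cvars t. la X \<notin> G1 \<longrightarrow> hfl (sc X) \<inter> G1 = {}"
  shows "pl G1 G2 sc (pop_last G1 la rem t)"
  using assms(2)
proof (induction t)
  case (TCtx X s)
  then have IH: "pl G1 G2 sc (pop_last G1 la rem s)" by simp
  show ?case
  proof (cases "la X \<in> G1")
    case True
    then have "la X \<notin> G2" using assms(1) by blast
    then show ?thesis using True IH by (simp add: Let_def)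
  next
    case False
    then have "hfl (sc X) \<inter> G1 = {}" using TCtx.prems by simp
    then show ?thesis using False IH by (simp add: Let_def)
  qed
next
  case (TFun f ts)
  then show ?case by (simp add: Let_def)
qed simp

lemma ball_sub: "(\<forall>x\<in>B. P x) \<Longrightarrow> A \<subseteq> B \<Longrightarrow> \<forall>x\<in>A. P x"
  by blast

lemma PF:
  assumes "G1 \<inter> G2 = {}" "pl G1 G2 sc t"
    "\<forall>x\<in>vars t. fv x \<notin> G2 \<longrightarrow> (\<forall>g ts. sv x = Node g ts \<longrightarrow> g \<notin> G2)"
    "\<forall>X\<in>cvars t. fc X \<notin> G2 \<longrightarrow> sc X \<noteq> Hole \<and> (\<forall>g ts. sc X = Node g ts \<longrightarrow> g \<notin> G2)"
  shows "ok G1 G2 sc sv (pop_first G2 fc rem fv t) \<and> Rt G2 sc sv (pop_first G2 fc rem fv t)"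
  using assms(2-)
proof (induction t)
  case (TVar x)
  show ?case
  proof (cases "fv x \<in> G2")
    case True
    then have "fv x \<notin> G1" using assms(1) by blast
    then show ?thesis using True by (simp add: Rt_TFun)
  next
    case False
    have nG: "\<forall>g ts. sv x = Node g ts \<longrightarrow> g \<notin> G2" using TVar.prems False by simp
    have "Rt G2 sc sv (TVar x)" unfolding Rt_def
    proof (intro allI impI)
      fix p g o' ts assume h: "ainst sc sv p (TVar x) = ANode g o' ts" "g \<in> G2"
      then have "ann (Some p) (sv x) = ANode g o' ts" by simp
      then obtain gs where "sv x = Node g gs" by (cases "sv x") auto
      with nG h(2) show "o' = None" by blast
    qed
    then show ?thesis using False by simp
  qed
next
  case (TCtx X s)
  have p1: "pl G1 G2 sc s" and p2: "hfl (sc X) \<inter> G1 \<noteq> {} \<longrightarrow> (\<exists>a ss. s = TFun a ss \<and> a \<notin> G2)"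
    using TCtx.prems(1) by simp_all
  have p3: "\<forall>x\<in>vars s. fv x \<notin> G2 \<longrightarrow> (\<forall>g ts. sv x = Node g ts \<longrightarrow> g \<notin> G2)"
    using TCtx.prems(2) by (simp only: vars.simps)
  have p45: "\<forall>Y\<in>insert X (cvars s). fc Y \<notin> G2 \<longrightarrow> sc Y \<noteq> Hole \<and> (\<forall>g ts. sc Y = Node g ts \<longrightarrow> g \<notin> G2)"
    using TCtx.prems(3) by (simp only: cvars.simps)
  have p4: "\<forall>X\<in>cvars s. fc X \<notin> G2 \<longrightarrow> sc X \<noteq> Hole \<and> (\<forall>g ts. sc X = Node g ts \<longrightarrow> g \<notin> G2)"
  proof
    fix Y assume "Y \<in> cvars s"
    then have "Y \<in> insert X (cvars s)" by (rule insertI2)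
    with p45 show "fc Y \<notin> G2 \<longrightarrow> sc Y \<noteq> Hole \<and> (\<forall>g ts. sc Y = Node g ts \<longrightarrow> g \<notin> G2)" by (rule bspec)
  qed
  have p5: "fc X \<notin> G2 \<longrightarrow> sc X \<noteq> Hole \<and> (\<forall>g ts. sc X = Node g ts \<longrightarrow> g \<notin> G2)"
    using p45 insertI1[of X "cvars s"] by (rule bspec)
  have IH: "ok G1 G2 sc sv (pop_first G2 fc rem fv s)" using TCtx.IH[OF p1 p3 p4] by blast
  have R2s: "R2 G2 sc sv (pop_first G2 fc rem fv s)" if hh: "hfl (sc X) \<inter> G1 \<noteq> {}"
  proof -
    obtain a ss where "s = TFun a ss" "a \<notin> G2" using p2 hh by blast
    then show ?thesis by (simp add: R2_TFun)
  qed
  show ?case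
  proof (cases "fc X \<in> G2")
    case True
    then have "fc X \<notin> G1" using assms(1) by blast
    then show ?thesis using True IH R2s by (cases "rem X") (simp_all add: Let_def Rt_TFun)
  next
    case False
    then have "sc X \<noteq> Hole" "\<forall>g ts. sc X = Node g ts \<longrightarrow> g \<notin> G2" using p5 by (blast, blast)
    then obtain g gs where gg: "sc X = Node g gs" "g \<notin> G2" by (cases "sc X") blast+
    have "Rt G2 sc sv (TCtx X (pop_first G2 fc rem fv s))" unfolding Rt_def
    proof (intro allI impI)
      fix p g' o' ts assume h: "ainst sc sv p (TCtx X (pop_first G2 fc rem fv s)) = ANode g' o' ts" "g' \<in> G2"
      then have "g' = g" using gg(1) by simp
      then show "o' = None" using gg(2) h(2) by blast
    qed
    then show ?thesis using False IH R2s by (simp add: Let_def)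
  qed
next
  case (TFun f ts)
  have "\<forall>t\<in>set ts. ok G1 G2 sc sv (pop_first G2 fc rem fv t) \<and> Rt G2 sc sv (pop_first G2 fc rem fv t)"
  proof
    fix t assume t: "t \<in> set ts"
    have sv: "vars t \<subseteq> vars (TFun f ts)" using t by auto
    have sc: "cvars t \<subseteq> cvars (TFun f ts)" using t by auto
    show "ok G1 G2 sc sv (pop_first G2 fc rem fv t) \<and> Rt G2 sc sv (pop_first G2 fc rem fv t)"
    proof (rule TFun.IH[OF t])
      show "pl G1 G2 sc t" using TFun.prems(1) t by simp
      show "\<forall>x\<in>vars t. fv x \<notin> G2 \<longrightarrow> (\<forall>g ts. sv x = Node g ts \<longrightarrow> g \<notin> G2)"
        using ball_sub[OF TFun.prems(2) sv] .
      show "\<forall>X\<in>cvars t. fc X \<notin> G2 \<longrightarrow> sc X \<noteq> Hole \<and> (\<forall>g ts. sc X = Node g ts \<longrightarrow> g \<notin> G2)"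
        using ball_sub[OF TFun.prems(3) sc] .
    qed
  qed
  then show ?case by (simp add: Rt_TFun)
qed



lemma gc_node: "ground_ctxt ar C \<Longrightarrow> C \<noteq> Hole \<Longrightarrow> \<exists>b ts. C = Node b ts"
  by (cases C) auto

lemma gc_unary: "ground_ctxt ar (Node b ts) \<Longrightarrow> ar b = 1 \<Longrightarrow> \<exists>D. ts = [D] \<and> ground_ctxt ar D"
  by (cases ts) (auto simp: ground_ctxt_def)

lemma gt_unary: "ground_term ar (Node b ts) \<Longrightarrow> ar b = 1 \<Longrightarrow> \<exists>D. ts = [D] \<and> ground_term ar D"
  by (cases ts) (auto simp: ground_term_def)

lemma gt_node: "ground_term ar t \<Longrightarrow> \<exists>b ts. t = Node b ts"
  by (cases t) (auto simp: ground_term_def)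

lemma dl_ground: "ground_ctxt ar C \<Longrightarrow> C = fill D (Node a [Hole]) \<Longrightarrow> ground_ctxt ar D"
  using wf_fill_D[of ar D] nholes_fill[of D "Node a [Hole]"] by (auto simp: ground_ctxt_def)

lemma partB:
  assumes disj: "G1 \<inter> G2 = {}" and ar: "\<forall>a \<in> G1 \<union> G2. ar a = 1"
    and sol: "is_nonempty_solution ar sc sv u v"
  shows "\<exists>la rem1 fc rem2 fv sc' sv'.
               let u' = transform G1 G2 la rem1 fc rem2 fv u;
                   v' = transform G1 G2 la rem1 fc rem2 fv v
               in is_nonempty_solution ar sc' sv' u' v'
                  \<and> inst sc' sv' u' = inst sc sv u
                  \<and> non_crossing G1 G2 sc' sv' u' v'"
proof -
  define CV where "CV = cvars u \<union> cvars v"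
  define VV where "VV = vars u \<union> vars v"
  have gX: "ground_ctxt ar (sc X) \<and> sc X \<noteq> Hole" if "X \<in> CV" for X
    using sol that unfolding CV_def is_nonempty_solution_def is_solution_def is_subst_for_def by blast
  have gx: "ground_term ar (sv x)" if "x \<in> VV" for x
    using sol that unfolding VV_def is_nonempty_solution_def is_solution_def is_subst_for_def by blast
  define la where "la X = (SOME f. hfl (sc X) = {f})" for X
  define sc1 where "sc1 X = (if la X \<in> G1 then dl (sc X) else sc X)" for X
  define rem1 where "rem1 X = (sc1 X = Hole)" for X
  define fc where "fc X = (case sc1 X of Node b _ \<Rightarrow> b | Hole \<Rightarrow> undefined)" for X
  define rem2 where "rem2 X = (case sc1 X of Node b ts \<Rightarrow> hd ts = Hole | Hole \<Rightarrow> True)" for X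
  define sc' where "sc' X = (if fc X \<in> G2 then (case sc1 X of Node b ts \<Rightarrow> hd ts | Hole \<Rightarrow> Hole) else sc1 X)" for X
  define fv where "fv x = (case sv x of Node b _ \<Rightarrow> b | Hole \<Rightarrow> undefined)" for x
  define sv' where "sv' x = (if fv x \<in> G2 then (case sv x of Node b ts \<Rightarrow> hd ts | Hole \<Rightarrow> Hole) else sv x)" for x
  have hX: "hfl (sc X) = {la X}" if "X \<in> CV" for X
  proof -
    have "\<exists>f. hfl (sc X) = {f}" using gX[OF that] hfl1 by (auto simp: ground_ctxt_def)
    then show ?thesis unfolding la_def by (rule someI_ex)
  qed
  have dX: "sc X = fill (sc1 X) (Node (la X) [Hole]) \<and> ground_ctxt ar (sc1 X)" if "X \<in> CV" "la X \<in> G1" for X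
  proof -
    have "sc X = fill (dl (sc X)) (Node (la X) [Hole])"
      using gX[OF that(1)] hX[OF that(1)] ar that(2) by (intro dl_fill[of ar "sc X" "la X"]) (auto simp: ground_ctxt_def)
    moreover have "sc1 X = dl (sc X)" using that(2) by (simp add: sc1_def)
    ultimately show ?thesis using dl_ground gX[OF that(1)] by metis
  qed
  have s1X: "ground_ctxt ar (sc1 X) \<and> sc1 X \<noteq> Hole" if "X \<in> CV" "\<not> (la X \<in> G1 \<and> rem1 X)" for X
  proof (cases "la X \<in> G1")
    case True
    then show ?thesis using dX[OF that(1) True] that(2) by (simp add: rem1_def)
  next
    case False
    then show ?thesis using gX[OF that(1)] by (simp add: sc1_def)
  qed
  have nodeX: "\<exists>ts. sc1 X = Node (fc X) ts \<and> ground_ctxt ar (sc' X) \<and>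
      (fc X \<in> G2 \<longrightarrow> ts = [sc' X] \<and> (rem2 X \<longleftrightarrow> sc' X = Hole)) \<and>
      (fc X \<notin> G2 \<longrightarrow> sc' X = sc1 X)"
    if XC: "X \<in> CV" and nr: "\<not> (la X \<in> G1 \<and> rem1 X)" for X
  proof -
    obtain b ts where bts: "sc1 X = Node b ts" using s1X[OF XC nr] gc_node by blast
    have fcb: "fc X = b" using bts by (simp add: fc_def)
    show ?thesis
    proof (cases "b \<in> G2")
      case True
      then obtain D where D: "ts = [D]" "ground_ctxt ar D"
        using gc_unary[of ar b ts] s1X[OF XC nr] bts ar by auto
      have "sc' X = D" using True fcb bts D by (simp add: sc'_def)
      moreover have "rem2 X \<longleftrightarrow> D = Hole" using bts D by (simp add: rem2_def)
      ultimately show ?thesis using bts fcb D True by simp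
    next
      case False
      then show ?thesis using bts fcb s1X[OF XC nr] by (simp add: sc'_def)
    qed
  qed
  have nodex: "\<exists>ts. sv x = Node (fv x) ts \<and> ground_term ar (sv' x) \<and>
      (fv x \<in> G2 \<longrightarrow> ts = [sv' x]) \<and> (fv x \<notin> G2 \<longrightarrow> sv' x = sv x)" if xV: "x \<in> VV" for x
  proof -
    obtain b ts where bts: "sv x = Node b ts" using gx[OF xV] gt_node by blast
    have fvb: "fv x = b" using bts by (simp add: fv_def)
    show ?thesis
    proof (cases "b \<in> G2")
      case True
      then obtain D where D: "ts = [D]" "ground_term ar D"
        using gt_unary[of ar b ts] gx[OF xV] bts ar by auto
      have "sv' x = D" using True fvb bts D by (simp add: sv'_def)
      then show ?thesis using bts fvb D True by simp
    next
      case False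
      then show ?thesis using bts fvb gx[OF xV] by (simp add: sv'_def)
    qed
  qed
  have key: "inst sc sv t = inst sc' sv' (transform G1 G2 la rem1 fc rem2 fv t) \<and>
     (\<forall>X\<in>cvars (transform G1 G2 la rem1 fc rem2 fv t). ground_ctxt ar (sc' X) \<and> sc' X \<noteq> Hole) \<and>
     (\<forall>x\<in>vars (transform G1 G2 la rem1 fc rem2 fv t). ground_term ar (sv' x)) \<and>
     NC G1 G2 (ainst sc' sv' [] (transform G1 G2 la rem1 fc rem2 fv t))"
    if tC: "cvars t \<subseteq> CV" and tV: "vars t \<subseteq> VV" for t
  proof -
    define t1 where "t1 = pop_last G1 la rem1 t"
    have tr: "transform G1 G2 la rem1 fc rem2 fv t = pop_first G2 fc rem2 fv t1"
      by (simp add: transform_def t1_def)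
    have c1: "X \<in> CV \<and> \<not> (la X \<in> G1 \<and> rem1 X)" if "X \<in> cvars t1" for X
      using that tC cvars_pl[of G1 la rem1 t] unfolding t1_def by blast
    have v1: "x \<in> VV" if "x \<in> vars t1" for x
      using that tV vars_pl[of G1 la rem1 t] unfolding t1_def by blast
    have E1: "inst sc sv t = inst sc1 sv t1" unfolding t1_def
    proof (rule L1, rule ballI)
      fix X assume "X \<in> cvars t"
      then have XC: "X \<in> CV" using tC by blast
      show "sc X = (if la X \<in> G1 then (if rem1 X then Node (la X) [Hole]
        else fill (sc1 X) (Node (la X) [Hole])) else sc1 X)"
      proof (cases "la X \<in> G1")
        case True
        then show ?thesis using dX[OF XC True] by (auto simp: rem1_def)
      next
        case False
        then show ?thesis by (simp add: sc1_def)
      qed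
    qed
    have E2: "inst sc1 sv t1 = inst sc' sv' (pop_first G2 fc rem2 fv t1)"
    proof (rule L2; rule ballI)
      fix X assume "X \<in> cvars t1"
      then obtain ts where ts: "sc1 X = Node (fc X) ts" "ground_ctxt ar (sc' X)"
          "fc X \<in> G2 \<longrightarrow> ts = [sc' X] \<and> (rem2 X \<longleftrightarrow> sc' X = Hole)" "fc X \<notin> G2 \<longrightarrow> sc' X = sc1 X"
        using nodeX c1 by blast
      then show "sc1 X = (if fc X \<in> G2 then (if rem2 X then Node (fc X) [Hole]
        else Node (fc X) [sc' X]) else sc' X)" by auto
    next
      fix x assume "x \<in> vars t1"
      then obtain ts where "sv x = Node (fv x) ts" "fv x \<in> G2 \<longrightarrow> ts = [sv' x]" "fv x \<notin> G2 \<longrightarrow> sv' x = sv x"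
        using nodex v1 by blast
      then show "sv x = (if fv x \<in> G2 then Node (fv x) [sv' x] else sv' x)" by auto
    qed
    have G: "ground_ctxt ar (sc' X) \<and> sc' X \<noteq> Hole" if "X \<in> cvars (pop_first G2 fc rem2 fv t1)" for X
    proof -
      have X1: "X \<in> cvars t1" and nr: "\<not> (fc X \<in> G2 \<and> rem2 X)"
        using that cvars_pf[of G2 fc rem2 fv t1] by blast+
      obtain ts where ts: "sc1 X = Node (fc X) ts" "ground_ctxt ar (sc' X)"
          "fc X \<in> G2 \<longrightarrow> ts = [sc' X] \<and> (rem2 X \<longleftrightarrow> sc' X = Hole)" "fc X \<notin> G2 \<longrightarrow> sc' X = sc1 X"
        using nodeX c1[OF X1] by blast
      then show ?thesis using nr by auto
    qed
    have GV: "ground_term ar (sv' x)" if "x \<in> vars (pop_first G2 fc rem2 fv t1)" for x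
    proof -
      have "x \<in> vars t1" using that vars_pf[of G2 fc rem2 fv t1] by blast
      then show ?thesis using nodex v1 by blast
    qed
    have C3: "\<forall>X\<in>cvars t. la X \<notin> G1 \<longrightarrow> hfl (sc' X) \<inter> G1 = {}"
    proof (intro ballI impI)
      fix X assume "X \<in> cvars t" and nl: "la X \<notin> G1"
      then have XC: "X \<in> CV" using tC by blast
      have nr: "\<not> (la X \<in> G1 \<and> rem1 X)" using nl by blast
      obtain ts where ts: "sc1 X = Node (fc X) ts"
          "fc X \<in> G2 \<longrightarrow> ts = [sc' X] \<and> (rem2 X \<longleftrightarrow> sc' X = Hole)" "fc X \<notin> G2 \<longrightarrow> sc' X = sc1 X"
        using nodeX[OF XC nr] by blast
      have s1: "sc1 X = sc X" using nl by (simp add: sc1_def)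
      have h: "hfl (sc X) = {la X}" using hX[OF XC] .
      show "hfl (sc' X) \<inter> G1 = {}"
      proof (cases "fc X \<in> G2")
        case True
        then have "sc X = Node (fc X) [sc' X]" using ts s1 by simp
        then have "hfl (sc X) = (if sc' X = Hole then {fc X} else {}) \<union> hfl (sc' X)" by simp
        then have "hfl (sc' X) \<subseteq> {la X}" using h by blast
        then show ?thesis using nl by blast
      next
        case False
        then show ?thesis using ts s1 h nl by simp
      qed
    qed
    have PLt: "pl G1 G2 sc' t1" unfolding t1_def by (rule PL[OF disj C3])
    have C1: "\<forall>x\<in>vars t1. fv x \<notin> G2 \<longrightarrow> (\<forall>g ts. sv' x = Node g ts \<longrightarrow> g \<notin> G2)"
    proof (intro ballI impI allI)
      fix x g ts assume "x \<in> vars t1" "fv x \<notin> G2" "sv' x = Node g ts"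
      moreover obtain ts' where "sv x = Node (fv x) ts'" "fv x \<notin> G2 \<longrightarrow> sv' x = sv x"
        using nodex v1 \<open>x \<in> vars t1\<close> by blast
      ultimately show "g \<notin> G2" by simp
    qed
    have C2: "\<forall>X\<in>cvars t1. fc X \<notin> G2 \<longrightarrow> sc' X \<noteq> Hole \<and> (\<forall>g ts. sc' X = Node g ts \<longrightarrow> g \<notin> G2)"
    proof (intro ballI impI)
      fix X assume X1: "X \<in> cvars t1" and nf: "fc X \<notin> G2"
      obtain ts where "sc1 X = Node (fc X) ts" "fc X \<notin> G2 \<longrightarrow> sc' X = sc1 X"
        using nodeX c1[OF X1] by blast
      then show "sc' X \<noteq> Hole \<and> (\<forall>g ts. sc' X = Node g ts \<longrightarrow> g \<notin> G2)" using nf by simp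
    qed
    have "ok G1 G2 sc' sv' (pop_first G2 fc rem2 fv t1)"
      using PF[OF disj PLt C1 C2] by blast
    then have NCt: "NC G1 G2 (ainst sc' sv' [] (pop_first G2 fc rem2 fv t1))" by (rule ok_NC)
    have E: "inst sc sv t = inst sc' sv' (pop_first G2 fc rem2 fv t1)" using E1 E2 by (rule trans)
    show ?thesis unfolding tr using E G GV NCt by blast
  qed
  have ku: "cvars u \<subseteq> CV" "vars u \<subseteq> VV" "cvars v \<subseteq> CV" "vars v \<subseteq> VV"
    unfolding CV_def VV_def by blast+
  note KU = key[OF ku(1,2)] and KV = key[OF ku(3,4)]
  have equv: "inst sc sv u = inst sc sv v"
    using sol unfolding is_nonempty_solution_def is_solution_def by blast
  define u' where "u' = transform G1 G2 la rem1 fc rem2 fv u"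
  define v' where "v' = transform G1 G2 la rem1 fc rem2 fv v"
  have U: "inst sc sv u = inst sc' sv' u' \<and> (\<forall>X\<in>cvars u'. ground_ctxt ar (sc' X) \<and> sc' X \<noteq> Hole) \<and>
     (\<forall>x\<in>vars u'. ground_term ar (sv' x)) \<and> NC G1 G2 (ainst sc' sv' [] u')"
    using KU unfolding u'_def .
  have V: "inst sc sv v = inst sc' sv' v' \<and> (\<forall>X\<in>cvars v'. ground_ctxt ar (sc' X) \<and> sc' X \<noteq> Hole) \<and>
     (\<forall>x\<in>vars v'. ground_term ar (sv' x)) \<and> NC G1 G2 (ainst sc' sv' [] v')"
    using KV unfolding v'_def .
  note U1 = conjunct1[OF U] and U2 = conjunct1[OF conjunct2[OF U]]
    and U3 = conjunct1[OF conjunct2[OF conjunct2[OF U]]] and U4 = conjunct2[OF conjunct2[OF conjunct2[OF U]]]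
  note V1 = conjunct1[OF V] and V2 = conjunct1[OF conjunct2[OF V]]
    and V3 = conjunct1[OF conjunct2[OF conjunct2[OF V]]] and V4 = conjunct2[OF conjunct2[OF conjunct2[OF V]]]
  have S: "is_nonempty_solution ar sc' sv' u' v'"
    unfolding is_nonempty_solution_def is_solution_def is_subst_for_def
  proof (intro conjI)
    show "\<forall>X\<in>cvars u' \<union> cvars v'. ground_ctxt ar (sc' X)"
    proof
      fix X assume "X \<in> cvars u' \<union> cvars v'"
      then show "ground_ctxt ar (sc' X)"
      proof
        assume "X \<in> cvars u'" then show ?thesis using U2 by (blast dest: bspec)
      next
        assume "X \<in> cvars v'" then show ?thesis using V2 by (blast dest: bspec)
      qed
    qed
    show "\<forall>x\<in>vars u' \<union> vars v'. ground_term ar (sv' x)"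
    proof
      fix x assume "x \<in> vars u' \<union> vars v'"
      then show "ground_term ar (sv' x)"
      proof
        assume "x \<in> vars u'" then show ?thesis using U3 by (rule bspec[rotated])
      next
        assume "x \<in> vars v'" then show ?thesis using V3 by (rule bspec[rotated])
      qed
    qed
    show "inst sc' sv' u' = inst sc' sv' v'" using U1[symmetric] equv V1 by (rule trans[OF trans])
    show "\<forall>X\<in>cvars u' \<union> cvars v'. sc' X \<noteq> Hole"
    proof
      fix X assume "X \<in> cvars u' \<union> cvars v'"
      then show "sc' X \<noteq> Hole"
      proof
        assume "X \<in> cvars u'" then show ?thesis using U2 by (blast dest: bspec)
      next
        assume "X \<in> cvars v'" then show ?thesis using V2 by (blast dest: bspec)
      qed
    qed
  qed
  have N: "non_crossing G1 G2 sc' sv' u' v'"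
    unfolding non_crossing_def
  proof (intro ballI)
    fix e assume "e \<in> aedges (ainst sc' sv' [] u') \<union> aedges (ainst sc' sv' [] v')"
    then show "case e of (a, o1, b, o2) \<Rightarrow> a \<in> G1 \<longrightarrow> b \<in> G2 \<longrightarrow> o1 = o2"
    proof
      assume "e \<in> aedges (ainst sc' sv' [] u')"
      then show ?thesis using U4 unfolding NC_def by (rule bspec[rotated])
    next
      assume "e \<in> aedges (ainst sc' sv' [] v')"
      then show ?thesis using V4 unfolding NC_def by (rule bspec[rotated])
    qed
  qed
  have "let u' = transform G1 G2 la rem1 fc rem2 fv u;
                   v' = transform G1 G2 la rem1 fc rem2 fv v
               in is_nonempty_solution ar sc' sv' u' v'
                  \<and> inst sc' sv' u' = inst sc sv u
                  \<and> non_crossing G1 G2 sc' sv' u' v'"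
    unfolding Let_def u'_def[symmetric] v'_def[symmetric] using S N U1 by argo
  then show ?thesis by blast
qed


theorem lemma5p1:
  fixes ar :: "'f \<Rightarrow> nat"
    and G1 G2 :: "'f set"
    and u v :: "('f, 'c, 'v) trm"
  assumes "G1 \<inter> G2 = {}"
    and "\<forall>a \<in> G1 \<union> G2. ar a = 1"
    and "wf_trm ar u" and "wf_trm ar v"
  shows "(\<forall>la rem1 fc rem2 fv.
            (\<exists>sc' sv'. is_solution ar sc' sv'
                (transform G1 G2 la rem1 fc rem2 fv u) (transform G1 G2 la rem1 fc rem2 fv v))
            \<longrightarrow> (\<exists>sc sv. is_solution ar sc sv u v))
       \<and> (\<forall>sc sv. is_nonempty_solution ar sc sv u v \<longrightarrow>
            (\<exists>la rem1 fc rem2 fv sc' sv'.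
               let u' = transform G1 G2 la rem1 fc rem2 fv u;
                   v' = transform G1 G2 la rem1 fc rem2 fv v
               in is_nonempty_solution ar sc' sv' u' v'
                  \<and> inst sc' sv' u' = inst sc sv u
                  \<and> non_crossing G1 G2 sc' sv' u' v'))"
proof (intro conjI allI impI)
  fix la rem1 fc rem2 fv
  assume "\<exists>sc' sv'. is_solution ar sc' sv'
                (transform G1 G2 la rem1 fc rem2 fv u) (transform G1 G2 la rem1 fc rem2 fv v)"
  then obtain sc' sv' where "is_solution ar sc' sv'
                (transform G1 G2 la rem1 fc rem2 fv u) (transform G1 G2 la rem1 fc rem2 fv v)" by blast
  then show "\<exists>sc sv. is_solution ar sc sv u v" by (rule partA[OF assms(2)])
next
  fix sc sv assume "is_nonempty_solution ar sc sv u v"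
  then show "\<exists>la rem1 fc rem2 fv sc' sv'.
               let u' = transform G1 G2 la rem1 fc rem2 fv u;
                   v' = transform G1 G2 la rem1 fc rem2 fv v
               in is_nonempty_solution ar sc' sv' u' v'
                  \<and> inst sc' sv' u' = inst sc sv u
                  \<and> non_crossing G1 G2 sc' sv' u' v'"
    by (rule partB[OF assms(1,2)])
qed

end
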